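(* For every compatible connection $\nabla=(\nabla_1,\dots,\nabla_N)$ on $\mathfrak{H}_n^\infty$, the operators $\nabla_1,\dots,\nabla_N$ extend to skew-adjoint (unbounded) operators on $\mathfrak{H}_n$ with domains $\mathcal{D}(D_1),\dots,\mathcal{D}(D_N)$, respectively.
   Context: $\theta$ is a real antisymmetric $N\times N$ matrix; $\mathcal{A}_\theta$ is the universal $C^*$-algebra generated by unitaries $u_1,\dots,u_N$ with $u_ku_l=\exp(2\pi i\theta_{kl})u_lu_k$; $\mathcal{A}_\theta^\infty$ is its smooth part for the torus action $\sigma_z(u^\alpha)=z^\alpha u^\alpha$, with derivations $\delta_ku_l=i\delta_{kl}u_l$ acting entrywise on matrices as $\delta_k^{(n)}$. $\mathfrak{H}_n=L^2(\mathcal{A}_\theta\otimes\mathbb{M}_n(\mathbb{C}),\tau\otimes\mathrm{tr})$ ($\tau(\sum c_\alpha u^\alpha)=c_0$, $\mathrm{tr}$ the normalized matrix trace), identified with $L^2(\mathbb{T}^N)\otimes\mathbb{M}_n(\mathbb{C})$ via $u^\alpha\mapsto z^\alpha$; $\eta$ is the canonical embedding, $\mathfrak{H}_n^\infty=\eta(\mathbb{M}_n(\mathcal{A}_\theta^\infty))$, $D_k\eta(x)=\eta(\delta_k^{(n)}x)$ (the usual partial derivative), and $\pi(a)\eta(x)=\eta(ax)$. $\mathcal{D}(D_k)$ is the span of $f\otimes m$ with $(\alpha_k\hat f(\alpha))_\alpha\in\ell^2(\mathbb{Z}^N)$ ($\hat f$ the Fourier transform), on which $D_k$ is skew-adjoint.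 A connection on $\mathfrak{H}_n^\infty$ is an $N$-tuple of linear maps $\nabla_k$ with $\nabla_k(\xi a)=(\nabla_k\xi)a+\xi\delta_k^{(n)}(a)$, compatible with the inner product $(x,y)\mapsto x^*y$ in the sense $(\nabla_kx)^*y+x^*\nabla_ky=\delta_k^{(n)}(x^*y)$. *)

theory Defs
  imports "HOL-Analysis.Analysis"
begin

text \<open>A multi-index \<alpha> \<in> Z^N is a function nat \<Rightarrow> int vanishing
  from N on.  An element of M_n(A_theta) (or of H_n) is represented by its Fourier
  coefficient function \<alpha> \<mapsto> c_\<alpha> \<in> M_n(C), i.e. x = sum c_\<alpha> u^\<alpha>,
  with u^\<alpha> = u_1^{\<alpha>_1} ... u_N^{\<alpha>_N}.\<close>

type_synonym 'n coeffs = "(nat \<Rightarrow> int) \<Rightarrow> complex^'n^'n"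

definition Zn :: "nat \<Rightarrow> (nat \<Rightarrow> int) set" where
  "Zn N = {\<alpha>. \<forall>k\<ge>N. \<alpha> k = 0}"

definition mscale :: "complex \<Rightarrow> complex^'n::finite^'n \<Rightarrow> complex^'n^'n" where
  "mscale c M = (\<chi> i j. c * M$i$j)"

definition madj :: "complex^'n::finite^'n \<Rightarrow> complex^'n^'n" where
  "madj M = (\<chi> i j. cnj (M$j$i))"

definition cadd :: "'n::finite coeffs \<Rightarrow> 'n coeffs \<Rightarrow> 'n coeffs" where
  "cadd f g = (\<lambda>\<alpha>. f \<alpha> + g \<alpha>)"

definition csub :: "'n::finite coeffs \<Rightarrow> 'n coeffs \<Rightarrow> 'n coeffs" where
  "csub f g = (\<lambda>\<alpha>. f \<alpha> - g \<alpha>)"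

definition csmul :: "complex \<Rightarrow> 'n::finite coeffs \<Rightarrow> 'n coeffs" where
  "csmul c f = (\<lambda>\<alpha>. mscale c (f \<alpha>))"

text \<open>Commutation phase: u^\<alpha> u^\<beta> = omega(\<alpha>,\<beta>) u^{\<alpha>+\<beta>}.\<close>
definition omega :: "(nat \<Rightarrow> nat \<Rightarrow> real) \<Rightarrow> nat \<Rightarrow> (nat \<Rightarrow> int) \<Rightarrow> (nat \<Rightarrow> int) \<Rightarrow> complex" where
  "omega \<theta> N \<alpha> \<beta> = exp (2 * pi * \<i> *
      of_real (\<Sum>k<N. \<Sum>l<k. of_int (\<alpha> k) * of_int (\<beta> l) * \<theta> k l))"

text \<open>Product in M_n(A_theta^infinity) (twisted convolution with matrix product).\<close>
definition tw_mult :: "(nat \<Rightarrow> nat \<Rightarrow> real) \<Rightarrow> nat \<Rightarrow> 'n::finite coeffs \<Rightarrow> 'n::finite coeffs \<Rightarrow> 'n coeffs" where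
  "tw_mult \<theta> N x y = (\<lambda>\<gamma>. if \<gamma> \<in> Zn N then
      infsum (\<lambda>\<alpha>. mscale (omega \<theta> N \<alpha> (\<gamma> - \<alpha>)) (x \<alpha> ** y (\<gamma> - \<alpha>))) (Zn N) else 0)"

text \<open>Involution: (c u^\<beta>)^* = c^* conj(omega(\<beta>,-\<beta>)) u^{-\<beta>}.\<close>
definition tw_star :: "(nat \<Rightarrow> nat \<Rightarrow> real) \<Rightarrow> nat \<Rightarrow> 'n::finite coeffs \<Rightarrow> 'n coeffs" where
  "tw_star \<theta> N x = (\<lambda>\<alpha>. if \<alpha> \<in> Zn N then
      mscale (cnj (omega \<theta> N (- \<alpha>) \<alpha>)) (madj (x (- \<alpha>))) else 0)"

definition deriv :: "nat \<Rightarrow> 'n::finite coeffs \<Rightarrow> 'n coeffs" where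
  "deriv k x = (\<lambda>\<alpha>. mscale (\<i> * of_int (\<alpha> k)) (x \<alpha>))"

text \<open>M_n(A_theta^infinity) = H_n^infinity (eta is the identity in this model):
  rapidly decreasing coefficient functions.\<close>
definition smooth :: "nat \<Rightarrow> 'n::finite coeffs set" where
  "smooth N = {f. (\<forall>\<alpha>. \<alpha> \<notin> Zn N \<longrightarrow> f \<alpha> = 0) \<and>
     (\<forall>p::nat. \<exists>C. \<forall>\<alpha>\<in>Zn N. (1 + (\<Sum>k<N. \<bar>real_of_int (\<alpha> k)\<bar>)) ^ p * norm (f \<alpha>) \<le> C)}"

text \<open>H_n = L^2(T^N) \<otimes> M_n(C) = l^2(Z^N, M_n(C)) via Fourier transform.\<close>
definition ell2 :: "nat \<Rightarrow> 'n::finite coeffs set" where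
  "ell2 N = {f. (\<forall>\<alpha>. \<alpha> \<notin> Zn N \<longrightarrow> f \<alpha> = 0) \<and> (\<lambda>\<alpha>. (norm (f \<alpha>))\<^sup>2) summable_on Zn N}"

text \<open>Inner product (tau \<otimes> tr)(x^* y), tr the normalized trace.\<close>
definition hs_ip :: "nat \<Rightarrow> 'n::finite coeffs \<Rightarrow> 'n coeffs \<Rightarrow> complex" where
  "hs_ip N f g = (\<Sum>\<^sub>\<infinity>\<alpha>\<in>Zn N. \<Sum>i\<in>UNIV. \<Sum>j\<in>UNIV. cnj (f \<alpha> $ i $ j) * g \<alpha> $ i $ j)
                 / of_nat CARD('n)"

definition domD :: "nat \<Rightarrow> nat \<Rightarrow> 'n::finite coeffs set" where
  "domD N k = {f \<in> ell2 N. (\<lambda>\<alpha>. of_int (\<alpha> k) *\<^sub>R f \<alpha>) \<in> ell2 N}"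

definition is_connection ::
  "(nat \<Rightarrow> nat \<Rightarrow> real) \<Rightarrow> nat \<Rightarrow> (nat \<Rightarrow> 'n::finite coeffs \<Rightarrow> 'n coeffs) \<Rightarrow> bool" where
  "is_connection \<theta> N nab \<longleftrightarrow> (\<forall>k<N.
     (\<forall>x\<in>smooth N. nab k x \<in> smooth N) \<and>
     (\<forall>x\<in>smooth N. \<forall>y\<in>smooth N. nab k (cadd x y) = cadd (nab k x) (nab k y)) \<and>
     (\<forall>c. \<forall>x\<in>smooth N. nab k (csmul c x) = csmul c (nab k x)) \<and>
     (\<forall>\<xi>\<in>smooth N. \<forall>a\<in>smooth N.
        nab k (tw_mult \<theta> N \<xi> a) = cadd (tw_mult \<theta> N (nab k \<xi>) a) (tw_mult \<theta> N \<xi> (deriv k a))))"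

definition is_compatible ::
  "(nat \<Rightarrow> nat \<Rightarrow> real) \<Rightarrow> nat \<Rightarrow> (nat \<Rightarrow> 'n::finite coeffs \<Rightarrow> 'n coeffs) \<Rightarrow> bool" where
  "is_compatible \<theta> N nab \<longleftrightarrow> (\<forall>k<N. \<forall>x\<in>smooth N. \<forall>y\<in>smooth N.
     cadd (tw_mult \<theta> N (tw_star \<theta> N (nab k x)) y) (tw_mult \<theta> N (tw_star \<theta> N x) (nab k y))
       = deriv k (tw_mult \<theta> N (tw_star \<theta> N x) y))"

text \<open>Skew-adjoint unbounded operator T with domain Dm in the Hilbert space H:
  densely defined, linear, and T^* = -T (adjoint domain equals Dm).\<close>
definition skew_adjoint ::
  "'n::finite coeffs set \<Rightarrow> ('n coeffs \<Rightarrow> 'n coeffs \<Rightarrow> complex) \<Rightarrow> 'n coeffs set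
     \<Rightarrow> ('n coeffs \<Rightarrow> 'n coeffs) \<Rightarrow> bool" where
  "skew_adjoint H ip Dm T \<longleftrightarrow>
     Dm \<subseteq> H \<and> (\<forall>x\<in>Dm. T x \<in> H) \<and>
     (\<forall>x\<in>Dm. \<forall>y\<in>Dm. cadd x y \<in> Dm \<and> T (cadd x y) = cadd (T x) (T y)) \<and>
     (\<forall>c. \<forall>x\<in>Dm. csmul c x \<in> Dm \<and> T (csmul c x) = csmul c (T x)) \<and>
     (\<forall>f\<in>H. \<forall>e>0. \<exists>g\<in>Dm. Re (ip (csub f g) (csub f g)) < e\<^sup>2) \<and>
     (\<forall>y\<in>H. (\<exists>z\<in>H. \<forall>x\<in>Dm. ip (T x) y = ip x z) \<longleftrightarrow> y \<in> Dm) \<and>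
     (\<forall>x\<in>Dm. \<forall>y\<in>Dm. ip (T x) y = - ip x (T y))"

end

theory Submission
  imports Defs "HOL-Library.Function_Algebras"
begin

definition mip :: "complex^'n::finite^'n \<Rightarrow> complex^'n^'n \<Rightarrow> complex" where
  "mip M P = (\<Sum>i\<in>UNIV. \<Sum>j\<in>UNIV. cnj (M$i$j) * P$i$j)"

lemma norm_sq_mat: "(norm (M::complex^'m::finite^'n::finite))^2 = (\<Sum>i\<in>UNIV. \<Sum>j\<in>UNIV. (cmod (M$i$j))^2)"
  by (simp add: norm_vec_def L2_set_def sum_nonneg)

lemma mip_self: "mip M M = of_real ((norm M)^2)"
proof -
  have "mip M M = (\<Sum>i\<in>UNIV. \<Sum>j\<in>UNIV. of_real ((cmod (M$i$j))^2))"
    unfolding mip_def by (intro sum.cong refl) (metis complex_norm_square mult.commute)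
  then show ?thesis by (simp add: norm_sq_mat)
qed

lemma mip_bound: "cmod (mip M P) \<le> norm M * norm P"
proof -
  have "cmod (mip M P) \<le> (\<Sum>i\<in>UNIV. \<Sum>j\<in>UNIV. cmod (M$i$j) * cmod (P$i$j))"
    unfolding mip_def
    by (rule order_trans[OF norm_sum sum_mono], rule order_trans[OF norm_sum sum_mono]) (simp add: norm_mult)
  also have "\<dots> \<le> (\<Sum>i\<in>UNIV. norm (M$i) * norm (P$i))"
    apply (rule sum_mono)
    using L2_set_mult_ineq[of "\<lambda>j. cmod (M$_$j)" "\<lambda>j. cmod (P$_$j)" UNIV]
    by (simp add: norm_vec_def)
  also have "\<dots> \<le> norm M * norm P"
    using L2_set_mult_ineq[of "\<lambda>i. norm (M$i)" "\<lambda>i. norm (P$i)" UNIV]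
    by (simp add: norm_vec_def)
  finally show ?thesis .
qed

lemma mip_add_right: "mip M (P + Q) = mip M P + mip M Q"
  unfolding mip_def by (simp add: distrib_left sum.distrib)
lemma mip_add_left: "mip (P + Q) M = mip P M + mip Q M"
  unfolding mip_def by (simp add: distrib_right sum.distrib)
lemma mip_scale_right: "mip M (mscale c P) = c * mip M P"
  unfolding mip_def mscale_def by (simp add: sum_distrib_left algebra_simps)
lemma mip_scale_left: "mip (mscale c M) P = cnj c * mip M P"
  unfolding mip_def mscale_def by (simp add: sum_distrib_left algebra_simps)
lemma scaleR_comp2: "(r *\<^sub>R (P::complex^'n::finite^'n))$i$j = of_real r * P$i$j"
  by (simp only: vector_scaleR_component) (simp add: scaleR_conv_of_real)
lemma mip_scaleR_right: "mip M (r *\<^sub>R P) = of_real r * mip M P"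
  unfolding mip_def scaleR_comp2 by (simp add: sum_distrib_left algebra_simps)
lemma mip_scaleR_left: "mip (r *\<^sub>R M) P = of_real r * mip M P"
  unfolding mip_def scaleR_comp2 by (simp add: sum_distrib_left algebra_simps)
lemma mip_zero_left[simp]: "mip 0 P = 0" unfolding mip_def by simp
lemma mip_zero_right[simp]: "mip P 0 = 0" unfolding mip_def by simp

lemma bounded_linear_mip_right: "bounded_linear (\<lambda>P. mip M P)"
  apply (rule bounded_linear_intro[where K="norm M"])
    apply (simp add: mip_add_right)
   apply (subst mip_scaleR_right, simp add: scaleR_conv_of_real)
  by (metis mip_bound mult.commute)
lemma bounded_linear_mip_left: "bounded_linear (\<lambda>P. mip P M)"
  apply (rule bounded_linear_intro[where K="norm M"])
    apply (simp add: mip_add_left)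
   apply (subst mip_scaleR_left, simp add: scaleR_conv_of_real)
  by (metis mip_bound)

lemma norm_mscale: "norm (mscale c M) = cmod c * norm M"
proof -
  have "(norm (mscale c M))^2 = (cmod c * norm M)^2"
    unfolding norm_sq_mat power_mult_distrib
    by (simp add: mscale_def norm_mult power_mult_distrib sum_distrib_left)
  then show ?thesis by (simp add: power2_eq_iff_nonneg)
qed

lemma mscale_add: "mscale c (P + Q) = mscale c P + mscale c Q"
  unfolding mscale_def by (simp add: vec_eq_iff distrib_left)
lemma mscale_scaleR: "mscale c (r *\<^sub>R Q) = r *\<^sub>R mscale c Q"
  unfolding mscale_def by (simp add: vec_eq_iff scaleR_comp2)
lemma mscale_mscale: "mscale c (mscale d Q) = mscale (c * d) Q"
  unfolding mscale_def by (simp add: vec_eq_iff)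
lemma mscale_one[simp]: "mscale 1 Q = Q"
  unfolding mscale_def by (simp add: vec_eq_iff)
lemma mscale_zero[simp]: "mscale c 0 = 0"
  unfolding mscale_def by (simp add: vec_eq_iff)
lemma mscale_neg1: "mscale (-1) Q = - Q"
  unfolding mscale_def by (simp add: vec_eq_iff)
lemma bounded_linear_mscale: "bounded_linear (mscale c)"
  by (rule bounded_linear_intro[where K="cmod c"])
     (auto simp: mscale_add mscale_scaleR norm_mscale mult.commute)
lemma mscale_matmul: "mscale c (A ** P) = A ** mscale c P"
  unfolding mscale_def by (simp add: vec_eq_iff matrix_matrix_mult_def sum_distrib_left algebra_simps)

lemma norm_matmul: "norm ((A::complex^'n::finite^'n) ** (P::complex^'n^'n)) \<le> norm A * norm P"
proof -
  have b: "cmod ((A ** P)$i$j) ^2 \<le> (norm (A$i))^2 * (\<Sum>l\<in>UNIV. (cmod (P$l$j))^2)" for i j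
  proof -
    have "cmod ((A ** P)$i$j) \<le> (\<Sum>l\<in>UNIV. cmod (A$i$l) * cmod (P$l$j))"
      unfolding matrix_matrix_mult_def by (simp, rule order_trans[OF norm_sum]) (simp add: norm_mult)
    also have "\<dots> \<le> L2_set (\<lambda>l. cmod (A$i$l)) UNIV * L2_set (\<lambda>l. cmod (P$l$j)) UNIV"
      using L2_set_mult_ineq[of "\<lambda>l. cmod (A$i$l)" "\<lambda>l. cmod (P$l$j)" UNIV] by simp
    finally have "cmod ((A ** P)$i$j) \<le> norm (A$i) * L2_set (\<lambda>l. cmod (P$l$j)) UNIV"
      by (simp add: norm_vec_def)
    then have "cmod ((A ** P)$i$j)^2 \<le> (norm (A$i) * L2_set (\<lambda>l. cmod (P$l$j)) UNIV)^2"
      by (simp add: power_mono)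
    then show ?thesis by (simp add: power_mult_distrib L2_set_def sum_nonneg)
  qed
  have "(norm (A ** P))^2 \<le> (\<Sum>i\<in>UNIV. \<Sum>j\<in>UNIV. (norm (A$i))^2 * (\<Sum>l\<in>UNIV. (cmod (P$l$j))^2))"
    by (subst norm_sq_mat) (intro sum_mono b)
  also have "\<dots> = (\<Sum>i\<in>UNIV. (norm (A$i))^2) * (\<Sum>j\<in>UNIV. \<Sum>l\<in>UNIV. (cmod (P$l$j))^2)"
    by (rule sum_product[symmetric])
  also have "\<dots> = (norm A)^2 * (norm P)^2"
  proof -
    have "(\<Sum>i\<in>UNIV. (norm (A$i))^2) = (norm A)^2" by (simp add: norm_vec_def L2_set_def sum_nonneg)
    moreover have "(\<Sum>j\<in>UNIV. \<Sum>l\<in>UNIV. (cmod (P$l$j))^2) = (norm P)^2"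
      unfolding norm_sq_mat[of P] by (rule sum.swap)
    ultimately show ?thesis by simp
  qed
  finally have "(norm (A ** P))^2 \<le> (norm A * norm P)^2" by (simp add: power_mult_distrib)
  then show ?thesis by (rule power2_le_imp_le) simp
qed

lemma mip_matmul: "mip ((A::complex^'n::finite^'n) ** (P::complex^'n^'n)) Y = mip P (madj A ** Y)"
proof -
  have "mip (A ** P) Y = (\<Sum>i\<in>UNIV. \<Sum>j\<in>UNIV. \<Sum>l\<in>UNIV. cnj (A$i$l) * cnj (P$l$j) * Y$i$j)"
    unfolding mip_def matrix_matrix_mult_def by (simp add: sum_distrib_right)
  also have "\<dots> = (\<Sum>l\<in>UNIV. \<Sum>j\<in>UNIV. \<Sum>i\<in>UNIV. cnj (A$i$l) * cnj (P$l$j) * Y$i$j)"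
  proof -
    have "(\<Sum>i\<in>UNIV. \<Sum>j\<in>UNIV. \<Sum>l\<in>UNIV. cnj (A$i$l) * cnj (P$l$j) * Y$i$j)
       = (\<Sum>i\<in>UNIV. \<Sum>l\<in>UNIV. \<Sum>j\<in>UNIV. cnj (A$i$l) * cnj (P$l$j) * Y$i$j)"
      by (intro sum.cong refl sum.swap)
    also have "\<dots> = (\<Sum>l\<in>UNIV. \<Sum>i\<in>UNIV. \<Sum>j\<in>UNIV. cnj (A$i$l) * cnj (P$l$j) * Y$i$j)"
      by (rule sum.swap)
    also have "\<dots> = (\<Sum>l\<in>UNIV. \<Sum>j\<in>UNIV. \<Sum>i\<in>UNIV. cnj (A$i$l) * cnj (P$l$j) * Y$i$j)"
      by (intro sum.cong refl sum.swap)
    finally show ?thesis .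
  qed
  also have "\<dots> = mip P (madj A ** Y)"
    unfolding mip_def matrix_matrix_mult_def madj_def by (simp add: sum_distrib_left algebra_simps)
  finally show ?thesis .
qed

lemma madj_nth[simp]: "madj A $ i $ j = cnj (A $ j $ i)"
  by (simp add: madj_def)

lemma norm_madj: "norm (madj (A::complex^'n::finite^'n)) = norm A"
proof -
  have "(norm (madj A))^2 = (\<Sum>i\<in>UNIV. \<Sum>j\<in>UNIV. (cmod (A$j$i))^2)"
    by (subst norm_sq_mat) simp
  also have "\<dots> = (norm A)^2"
    by (subst norm_sq_mat) (rule sum.swap)
  finally show ?thesis by (simp add: power2_eq_iff_nonneg)
qed

lemma Zn_0[simp]: "0 \<in> Zn N" by (simp add: Zn_def)
lemma Zn_add: "a \<in> Zn N \<Longrightarrow> b \<in> Zn N \<Longrightarrow> a + b \<in> Zn N" by (simp add: Zn_def)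
lemma Zn_diff: "a \<in> Zn N \<Longrightarrow> b \<in> Zn N \<Longrightarrow> a - b \<in> Zn N" by (simp add: Zn_def)
lemma Zn_uminus: "a \<in> Zn N \<Longrightarrow> - a \<in> Zn N" by (simp add: Zn_def)

lemma ell2_out: "f \<in> ell2 N \<Longrightarrow> \<alpha> \<notin> Zn N \<Longrightarrow> f \<alpha> = 0"
  by (simp add: ell2_def)
lemma ell2_summ: "f \<in> ell2 N \<Longrightarrow> (\<lambda>\<alpha>. (norm (f \<alpha>))\<^sup>2) summable_on Zn N"
  by (simp add: ell2_def)

lemma ell2_comb:
  assumes "\<And>\<alpha>. \<alpha> \<notin> Zn N \<Longrightarrow> g \<alpha> = 0" "p \<in> ell2 N" "q \<in> ell2 N"
    and "\<And>\<alpha>. \<alpha> \<in> Zn N \<Longrightarrow> (norm (g \<alpha>))\<^sup>2 \<le> c * (norm (p \<alpha>))\<^sup>2 + c * (norm (q \<alpha>))\<^sup>2"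
  shows "g \<in> ell2 N"
proof -
  have "(\<lambda>\<alpha>. c * (norm (p \<alpha>))\<^sup>2 + c * (norm (q \<alpha>))\<^sup>2) summable_on Zn N"
    by (intro summable_on_add summable_on_cmult_right ell2_summ assms)
  then have "(\<lambda>\<alpha>. (norm (g \<alpha>))\<^sup>2) summable_on Zn N"
    by (rule summable_on_comparison_test) (use assms(4) in auto)
  then show ?thesis using assms(1) by (simp add: ell2_def)
qed

lemma sq_sum_le: "((a::real) + b)\<^sup>2 \<le> 2 * a\<^sup>2 + 2 * b\<^sup>2"
  using sum_squares_bound[of a b] unfolding power2_sum by linarith

lemma ell2_cadd: "f \<in> ell2 N \<Longrightarrow> g \<in> ell2 N \<Longrightarrow> cadd f g \<in> ell2 N"
proof (rule ell2_comb[where c=2])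
  fix \<alpha> assume "f \<in> ell2 N" "g \<in> ell2 N"
  show "(norm (cadd f g \<alpha>))\<^sup>2 \<le> 2 * (norm (f \<alpha>))\<^sup>2 + 2 * (norm (g \<alpha>))\<^sup>2"
  proof -
    have "norm (cadd f g \<alpha>) \<le> norm (f \<alpha>) + norm (g \<alpha>)" by (simp add: cadd_def norm_triangle_ineq)
    then have "(norm (cadd f g \<alpha>))\<^sup>2 \<le> (norm (f \<alpha>) + norm (g \<alpha>))\<^sup>2" by (simp add: power_mono)
    also have "\<dots> \<le> 2 * (norm (f \<alpha>))\<^sup>2 + 2 * (norm (g \<alpha>))\<^sup>2"
      by (rule sq_sum_le)
    finally show ?thesis .
  qed
qed (auto simp: cadd_def ell2_out)

lemma ell2_scale:
  assumes "f \<in> ell2 N" "\<And>\<alpha>. \<alpha> \<notin> Zn N \<Longrightarrow> g \<alpha> = 0" "\<And>\<alpha>. \<alpha> \<in> Zn N \<Longrightarrow> norm (g \<alpha>) \<le> c * norm (f \<alpha>)"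
  shows "g \<in> ell2 N"
proof (rule ell2_comb[where c="c^2" and p=f and q=f])
  fix \<alpha> assume a: "\<alpha> \<in> Zn N"
  have "(norm (g \<alpha>))\<^sup>2 \<le> (c * norm (f \<alpha>))\<^sup>2" using assms(3)[OF a] by (simp add: power_mono)
  then have "(norm (g \<alpha>))\<^sup>2 \<le> c^2 * (norm (f \<alpha>))\<^sup>2" by (simp add: power_mult_distrib)
  moreover have "0 \<le> c^2 * (norm (f \<alpha>))\<^sup>2" by simp
  ultimately show "(norm (g \<alpha>))\<^sup>2 \<le> c^2 * (norm (f \<alpha>))\<^sup>2 + c^2 * (norm (f \<alpha>))\<^sup>2"
    by linarith
qed (use assms in auto)

lemma ell2_csmul: "f \<in> ell2 N \<Longrightarrow> csmul c f \<in> ell2 N"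
  by (rule ell2_scale[where c="cmod c"]) (auto simp: csmul_def norm_mscale ell2_out)

lemma ell2_pt_bound:
  assumes "f \<in> ell2 N" "\<alpha> \<in> Zn N"
  shows "(norm (f \<alpha>))\<^sup>2 \<le> infsum (\<lambda>\<alpha>. (norm (f \<alpha>))\<^sup>2) (Zn N)"
  using finite_sum_le_infsum[OF ell2_summ[OF assms(1)], of "{\<alpha>}"] assms by simp

definition ip0 :: "nat \<Rightarrow> 'n::finite coeffs \<Rightarrow> 'n coeffs \<Rightarrow> complex" where
  "ip0 N f g = infsum (\<lambda>\<alpha>. mip (f \<alpha>) (g \<alpha>)) (Zn N)"

lemma hs_ip_ip0: "hs_ip N (f::'n::finite coeffs) g = ip0 N f g / of_nat CARD('n::finite)"
  by (simp add: hs_ip_def ip0_def mip_def)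

lemma mip_abs_le: "cmod (mip M P) \<le> ((norm M)\<^sup>2 + (norm P)\<^sup>2) / 2"
proof -
  have "2 * cmod (mip M P) \<le> (norm M)\<^sup>2 + (norm P)\<^sup>2"
    using mip_bound[of M P] sum_squares_bound[of "norm M" "norm P"] by linarith
  then show ?thesis by simp
qed

lemma mip_summable:
  assumes "f \<in> ell2 N" "g \<in> ell2 N"
  shows "(\<lambda>\<alpha>. mip (f \<alpha>) (g \<alpha>)) summable_on Zn N"
proof -
  have s: "(\<lambda>\<alpha>. ((norm (f \<alpha>))\<^sup>2 + (norm (g \<alpha>))\<^sup>2) / 2) summable_on Zn N"
    using summable_on_cmult_left[OF summable_on_add[OF ell2_summ[OF assms(1)] ell2_summ[OF assms(2)]], of "1/2"]
    by simp
  moreover have b: "\<And>\<alpha>. \<alpha> \<in> Zn N \<Longrightarrow> norm (mip (f \<alpha>) (g \<alpha>)) \<le> ((norm (f \<alpha>))\<^sup>2 + (norm (g \<alpha>))\<^sup>2) / 2"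
    by (rule mip_abs_le)
  have "(\<lambda>\<alpha>. norm (mip (f \<alpha>) (g \<alpha>))) summable_on Zn N"
    by (rule Infinite_Sum.abs_summable_on_comparison_test'[OF s b])
  then show ?thesis using summable_on_iff_abs_summable_on_complex by blast
qed

lemma ip0_add_left: "f \<in> ell2 N \<Longrightarrow> g \<in> ell2 N \<Longrightarrow> h \<in> ell2 N \<Longrightarrow> ip0 N (cadd f g) h = ip0 N f h + ip0 N g h"
  unfolding ip0_def cadd_def mip_add_left by (intro infsum_add mip_summable)
lemma ip0_add_right: "f \<in> ell2 N \<Longrightarrow> g \<in> ell2 N \<Longrightarrow> h \<in> ell2 N \<Longrightarrow> ip0 N h (cadd f g) = ip0 N h f + ip0 N h g"
  unfolding ip0_def cadd_def mip_add_right by (intro infsum_add mip_summable)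
lemma ip0_neg_right: "ip0 N h (csmul (-1) f) = - ip0 N h f"
  unfolding ip0_def csmul_def mip_scale_right by (simp add: infsum_uminus)

lemma ip0_self: "f \<in> ell2 N \<Longrightarrow> ip0 N f f = of_real (infsum (\<lambda>\<alpha>. (norm (f \<alpha>))\<^sup>2) (Zn N))"
  unfolding ip0_def mip_self by (rule infsumI, rule has_sum_of_real, rule has_sum_infsum, rule ell2_summ)

definition Bf :: "(nat \<Rightarrow> nat \<Rightarrow> real) \<Rightarrow> nat \<Rightarrow> (nat \<Rightarrow> int) \<Rightarrow> (nat \<Rightarrow> int) \<Rightarrow> real" where
  "Bf \<theta> N a b = (\<Sum>k<N. \<Sum>l<k. of_int (a k) * of_int (b l) * \<theta> k l)"

definition Ef :: "real \<Rightarrow> complex" where "Ef r = exp (2 * of_real pi * \<i> * of_real r)"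

lemma omega_Ef: "omega \<theta> N a b = Ef (Bf \<theta> N a b)"
  by (simp add: omega_def Ef_def Bf_def)

lemma Ef_add: "Ef r * Ef s = Ef (r + s)"
  by (simp add: Ef_def exp_add[symmetric] algebra_simps)
lemma Ef_cnj: "cnj (Ef r) = Ef (- r)"
  by (simp add: Ef_def exp_cnj)
lemma norm_Ef: "norm (Ef r) = 1"
  by (simp add: Ef_def)
lemma Ef_0: "Ef 0 = 1" by (simp add: Ef_def)

lemma norm_omega: "norm (omega \<theta> N a b) = 1"
  by (simp add: omega_Ef norm_Ef)

lemma Bf_neg_left: "Bf \<theta> N (- a) b = - Bf \<theta> N a b"
  by (simp add: Bf_def sum_negf)
lemma Bf_add_right: "Bf \<theta> N a (b + c) = Bf \<theta> N a b + Bf \<theta> N a c"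
  by (simp add: Bf_def sum.distrib algebra_simps)
lemma Bf_neg_right: "Bf \<theta> N a (- b) = - Bf \<theta> N a b"
  by (simp add: Bf_def sum_negf)
lemma Bf_zero_left: "Bf \<theta> N 0 b = 0" by (simp add: Bf_def)
lemma Bf_zero_right: "Bf \<theta> N a 0 = 0" by (simp add: Bf_def)

lemma omega_zero_left[simp]: "omega \<theta> N 0 b = 1" by (simp add: omega_Ef Bf_zero_left Ef_0)
lemma omega_zero_right[simp]: "omega \<theta> N a 0 = 1" by (simp add: omega_Ef Bf_zero_right Ef_0)

lemma phase_id: "omega \<theta> N (- \<alpha>) (\<beta> + \<alpha>) * cnj (omega \<theta> N \<alpha> (- \<alpha>)) = cnj (omega \<theta> N \<alpha> \<beta>)"
  by (simp add: omega_Ef Ef_cnj Ef_add Bf_neg_left Bf_add_right Bf_neg_right)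

lemma prod_summable:
  fixes u v :: "_ \<Rightarrow> real"
  assumes "u summable_on A" "v summable_on B" "\<And>x. x \<in> A \<Longrightarrow> u x \<ge> 0" "\<And>y. y \<in> B \<Longrightarrow> v y \<ge> 0"
  shows "(\<lambda>(x, y). u x * v y) summable_on A \<times> B"
proof -
  have "(\<lambda>p. u (fst p) * v (snd p)) summable_on Sigma A (\<lambda>_. B)"
  proof (rule summable_on_SigmaI[where g="\<lambda>x. u x * infsum v B"])
    show "((\<lambda>y. u (fst (x, y)) * v (snd (x, y))) has_sum u x * infsum v B) B" if "x \<in> A" for x
      using has_sum_cmult_right[OF has_sum_infsum[OF assms(2)], of "u x"] by simp
    show "(\<lambda>x. u x * infsum v B) summable_on A"
      by (rule summable_on_cmult_left[OF assms(1)])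
  qed (use assms in auto)
  then show ?thesis by (simp add: case_prod_unfold)
qed

lemma shift_bij: "bij_betw (\<lambda>(\<beta>, \<alpha>). (\<beta> + \<alpha>, \<alpha>)) (Zn N \<times> Zn N) (Zn N \<times> Zn N)"
  by (rule bij_betwI[where g="\<lambda>(\<gamma>, \<alpha>). (\<gamma> - \<alpha>, \<alpha>)"]) (auto simp: Zn_add Zn_diff)

lemma neg_bij: "bij_betw uminus (Zn N) (Zn N)"
  by (rule bij_betwI[where g=uminus]) (auto simp: Zn_uminus)

lemma wcs:
  fixes w t :: "_ \<Rightarrow> real"
  assumes "w summable_on A" "(\<lambda>x. w x * (t x)\<^sup>2) summable_on A" "\<And>x. x \<in> A \<Longrightarrow> w x \<ge> 0"
    "\<And>x. x \<in> A \<Longrightarrow> t x \<ge> 0"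
  shows "(\<lambda>x. w x * t x) summable_on A"
    and "(infsum (\<lambda>x. w x * t x) A)\<^sup>2 \<le> infsum w A * infsum (\<lambda>x. w x * (t x)\<^sup>2) A"
proof -
  have le: "w x * t x \<le> (lam * w x + w x * (t x)\<^sup>2 / lam) / 2" if "x \<in> A" "lam > 0" for x lam
  proof -
    have "2 * lam * t x \<le> lam\<^sup>2 + (t x)\<^sup>2" using sum_squares_bound[of lam "t x"] by simp
    then have "w x * (2 * lam * t x) \<le> w x * (lam\<^sup>2 + (t x)\<^sup>2)"
      using assms(3)[OF that(1)] by (rule mult_left_mono)
    then have "w x * (2 * lam * t x) / (2 * lam) \<le> w x * (lam\<^sup>2 + (t x)\<^sup>2) / (2 * lam)"
      using that(2) by (intro divide_right_mono) auto
    moreover have "w x * (2 * lam * t x) / (2 * lam) = w x * t x" using that(2) by simp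
    moreover have "w x * (lam\<^sup>2 + (t x)\<^sup>2) / (2 * lam) = (lam * w x + w x * (t x)\<^sup>2 / lam) / 2"
      using that(2) by (simp add: field_simps power2_eq_square)
    ultimately show ?thesis by simp
  qed
  have s1: "(\<lambda>x. (1 * w x + w x * (t x)\<^sup>2 / 1) / 2) summable_on A"
    using summable_on_cmult_left[OF summable_on_add[OF assms(1) assms(2)], of "1/2"] by simp
  show sm: "(\<lambda>x. w x * t x) summable_on A"
    by (rule summable_on_comparison_test[OF s1]) (use le[of _ 1] assms in auto)
  define s where "s = infsum (\<lambda>x. w x * t x) A"
  define W where "W = infsum w A"
  define S where "S = infsum (\<lambda>x. w x * (t x)\<^sup>2) A"
  have s0: "s \<ge> 0" unfolding s_def by (rule infsum_nonneg) (use assms in auto)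
  have W0: "W \<ge> 0" unfolding W_def by (rule infsum_nonneg) (use assms in auto)
  have S0: "S \<ge> 0" unfolding S_def by (rule infsum_nonneg) (use assms in auto)
  have key: "s \<le> (lam * W + S / lam) / 2" if "lam > 0" for lam
  proof -
    have "s \<le> infsum (\<lambda>x. (lam * w x + w x * (t x)\<^sup>2 / lam) / 2) A"
      unfolding s_def
    proof (rule infsum_mono[OF sm])
      show "(\<lambda>x. (lam * w x + w x * (t x)\<^sup>2 / lam) / 2) summable_on A"
        using summable_on_cmult_left[OF summable_on_add[OF summable_on_cmult_right[OF assms(1), of lam]
               summable_on_cmult_left[OF assms(2), of "1/lam"]], of "1/2"] by simp
    qed (use le that in auto)
    also have "\<dots> = (lam * W + S / lam) / 2"
    proof -
      have "infsum (\<lambda>x. (lam * w x + w x * (t x)\<^sup>2 / lam) / 2) A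
          = infsum (\<lambda>x. (lam * w x + w x * (t x)\<^sup>2 * (1 / lam)) * (1/2)) A" by simp
      also have "\<dots> = infsum (\<lambda>x. lam * w x + w x * (t x)\<^sup>2 * (1 / lam)) A * (1/2)"
        by (rule infsum_cmult_left) (intro summable_on_add summable_on_cmult_right summable_on_cmult_left assms)
      also have "infsum (\<lambda>x. lam * w x + w x * (t x)\<^sup>2 * (1 / lam)) A
          = infsum (\<lambda>x. lam * w x) A + infsum (\<lambda>x. w x * (t x)\<^sup>2 * (1 / lam)) A"
        by (intro infsum_add summable_on_cmult_right summable_on_cmult_left assms)
      also have "infsum (\<lambda>x. lam * w x) A = lam * W"
        unfolding W_def by (rule infsum_cmult_right) (use assms in auto)
      also have "infsum (\<lambda>x. w x * (t x)\<^sup>2 * (1 / lam)) A = S * (1 / lam)"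
        unfolding S_def by (rule infsum_cmult_left) (use assms in auto)
      finally show ?thesis by simp
    qed
    finally show ?thesis .
  qed
  show "s\<^sup>2 \<le> W * S" unfolding s_def[symmetric] W_def[symmetric] S_def[symmetric]
  proof (cases "W > 0 \<and> S > 0")
    case True
    define lam where "lam = sqrt (S / W)"
    have lp: "lam > 0" using True by (simp add: lam_def)
    have "lam * W = sqrt (W * S)" using True
      by (simp add: lam_def real_sqrt_divide field_simps real_sqrt_mult)
    moreover have "S / lam = sqrt (W * S)" using True
      by (simp add: lam_def real_sqrt_divide field_simps real_sqrt_mult)
    ultimately have "s \<le> sqrt (W * S)" using key[OF lp] by simp
    then have "s\<^sup>2 \<le> (sqrt (W * S))\<^sup>2" using s0 by (simp add: power_mono)
    then show ?thesis using W0 S0 by simp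
  next
    case False
    have "s \<le> 0"
    proof (rule ccontr)
      assume "\<not> s \<le> 0"
      then have sp: "s > 0" by simp
      show False
      proof (cases "W = 0")
        case True
        have "s \<le> ((S + 1) / s * W + S / ((S + 1) / s)) / 2" using key[of "(S+1)/s"] sp S0 by simp
        also have "\<dots> = S * s / (S + 1) / 2" using True S0 by simp
        also have "\<dots> < s" using sp S0 by (simp add: field_simps add_nonneg_pos)
        finally show False by simp
      next
        case False
        then have "S = 0" using \<open>\<not> (W > 0 \<and> S > 0)\<close> W0 S0 by auto
        have "s \<le> (s / (W + 1) * W + S / (s / (W + 1))) / 2" using key[of "s/(W+1)"] sp W0 by simp
        also have "\<dots> = s * W / (W + 1) / 2" using \<open>S = 0\<close> by simp
        also have "\<dots> < s" using sp W0 by (simp add: field_simps add_nonneg_pos)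
        finally show False by simp
      qed
    qed
    then have "s = 0" using s0 by simp
    then show ?thesis using W0 S0 by simp
  qed
qed

lemma le_1_sq: assumes "0 \<le> (t::real)" shows "t \<le> 1 + t\<^sup>2"
proof -
  have "2 * 1 * t \<le> 1\<^sup>2 + t\<^sup>2" by (rule sum_squares_bound)
  then show ?thesis using assms by simp
qed

locale conv =
  fixes \<theta> :: "nat \<Rightarrow> nat \<Rightarrow> real" and N :: nat and a :: "'n::finite coeffs"
  assumes az: "\<And>\<alpha>. \<alpha> \<notin> Zn N \<Longrightarrow> a \<alpha> = 0"
    and aw: "(\<lambda>\<alpha>. norm (a \<alpha>)) summable_on Zn N"
begin

definition W where "W = infsum (\<lambda>\<alpha>. norm (a \<alpha>)) (Zn N)"

definition ct :: "'n coeffs \<Rightarrow> (nat \<Rightarrow> int) \<Rightarrow> (nat \<Rightarrow> int) \<Rightarrow> complex^'n^'n" where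
  "ct x \<gamma> \<alpha> = mscale (omega \<theta> N \<alpha> (\<gamma> - \<alpha>)) (a \<alpha> ** x (\<gamma> - \<alpha>))"

abbreviation L where "L x \<equiv> tw_mult \<theta> N a x"

lemma L_eq: "L x \<gamma> = (if \<gamma> \<in> Zn N then infsum (ct x \<gamma>) (Zn N) else 0)"
  by (simp add: tw_mult_def ct_def[abs_def])

lemma ct_norm: "norm (ct x \<gamma> \<alpha>) \<le> norm (a \<alpha>) * norm (x (\<gamma> - \<alpha>))"
  by (simp add: ct_def norm_mscale norm_omega norm_matmul)

lemma W0: "W \<ge> 0" unfolding W_def by (rule infsum_nonneg) auto

lemma ct_summable:
  assumes x: "x \<in> ell2 N" and g: "\<gamma> \<in> Zn N"
  shows "(\<lambda>\<alpha>. norm (ct x \<gamma> \<alpha>)) summable_on Zn N" "ct x \<gamma> summable_on Zn N"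
proof -
  define X where "X = infsum (\<lambda>\<alpha>. (norm (x \<alpha>))\<^sup>2) (Zn N)"
  have b: "norm (ct x \<gamma> \<alpha>) \<le> norm (a \<alpha>) * (1 + X)" if "\<alpha> \<in> Zn N" for \<alpha>
  proof -
    have gz: "\<gamma> - \<alpha> \<in> Zn N" using g that by (rule Zn_diff)
    have "norm (x (\<gamma> - \<alpha>)) \<le> 1 + (norm (x (\<gamma> - \<alpha>)))\<^sup>2"
      by (rule le_1_sq) simp
    also have "\<dots> \<le> 1 + X" using ell2_pt_bound[OF x gz] unfolding X_def by simp
    finally have "norm (a \<alpha>) * norm (x (\<gamma> - \<alpha>)) \<le> norm (a \<alpha>) * (1 + X)"
      by (simp add: mult_left_mono)
    then show ?thesis using ct_norm[of x \<gamma> \<alpha>] by linarith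
  qed
  show s: "(\<lambda>\<alpha>. norm (ct x \<gamma> \<alpha>)) summable_on Zn N"
    by (rule Infinite_Sum.abs_summable_on_comparison_test'[OF summable_on_cmult_left[OF aw] b])
  show "ct x \<gamma> summable_on Zn N" by (rule abs_summable_summable[OF s])
qed

definition G :: "'n coeffs \<Rightarrow> (nat \<Rightarrow> int) \<times> (nat \<Rightarrow> int) \<Rightarrow> real" where
  "G x p = norm (a (snd p)) * (norm (x (fst p - snd p)))\<^sup>2"

lemma shift_summable:
  fixes F :: "(nat \<Rightarrow> int) \<times> (nat \<Rightarrow> int) \<Rightarrow> 'b::{topological_comm_monoid_add}"
  assumes "(\<lambda>(\<beta>, \<alpha>). F (\<beta> + \<alpha>, \<alpha>)) summable_on Zn N \<times> Zn N"
  shows "F summable_on Zn N \<times> Zn N"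
  using summable_on_reindex_bij_betw[OF shift_bij, of F N] assms by (simp add: case_prod_unfold)

lemma G_summable: "x \<in> ell2 N \<Longrightarrow> G x summable_on Zn N \<times> Zn N"
  apply (rule shift_summable)
  using prod_summable[of "\<lambda>\<beta>. (norm (x \<beta>))\<^sup>2" "Zn N" "\<lambda>\<alpha>. norm (a \<alpha>)" "Zn N", OF ell2_summ aw]
  by (simp add: G_def case_prod_unfold mult.commute)

lemma L_ell2: assumes x: "x \<in> ell2 N" shows "L x \<in> ell2 N"
proof -
  define S where "S \<gamma> = infsum (\<lambda>\<alpha>. G x (\<gamma>, \<alpha>)) (Zn N)" for \<gamma>
  have inner: "(\<lambda>\<alpha>. G x (\<gamma>, \<alpha>)) summable_on Zn N" if "\<gamma> \<in> Zn N" for \<gamma>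
    using summable_on_SigmaD1[of "\<lambda>\<gamma> \<alpha>. G x (\<gamma>, \<alpha>)" "Zn N" "\<lambda>_. Zn N" \<gamma>] G_summable[OF x] that
    by (simp add: case_prod_unfold)
  have Ss: "S summable_on Zn N"
    unfolding S_def by (rule summable_on_SigmaD[OF G_summable[OF x] inner]) 
  have bnd: "(norm (L x \<gamma>))\<^sup>2 \<le> W * S \<gamma>" if g: "\<gamma> \<in> Zn N" for \<gamma>
  proof -
    have "norm (L x \<gamma>) \<le> infsum (\<lambda>\<alpha>. norm (ct x \<gamma> \<alpha>)) (Zn N)"
      using g norm_infsum_bound[OF ct_summable(1)[OF x g]] by (simp add: L_eq)
    also have "\<dots> \<le> infsum (\<lambda>\<alpha>. norm (a \<alpha>) * norm (x (\<gamma> - \<alpha>))) (Zn N)"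
    proof (rule infsum_mono[OF ct_summable(1)[OF x g]])
      show "(\<lambda>\<alpha>. norm (a \<alpha>) * norm (x (\<gamma> - \<alpha>))) summable_on Zn N"
        by (rule wcs(1)[OF aw]) (use inner[OF g] in \<open>auto simp: G_def\<close>)
    qed (rule ct_norm)
    finally have le: "norm (L x \<gamma>) \<le> infsum (\<lambda>\<alpha>. norm (a \<alpha>) * norm (x (\<gamma> - \<alpha>))) (Zn N)" .
    have "S \<gamma> = infsum (\<lambda>\<alpha>. norm (a \<alpha>) * (norm (x (\<gamma> - \<alpha>)))\<^sup>2) (Zn N)"
      by (simp add: S_def G_def)
    moreover have "(infsum (\<lambda>\<alpha>. norm (a \<alpha>) * norm (x (\<gamma> - \<alpha>))) (Zn N))\<^sup>2 \<le> W * infsum (\<lambda>\<alpha>. norm (a \<alpha>) * (norm (x (\<gamma> - \<alpha>)))\<^sup>2) (Zn N)"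
      unfolding W_def by (rule wcs(2)[OF aw]) (use inner[OF g] in \<open>auto simp: G_def\<close>)
    ultimately have "(infsum (\<lambda>\<alpha>. norm (a \<alpha>) * norm (x (\<gamma> - \<alpha>))) (Zn N))\<^sup>2 \<le> W * S \<gamma>" by simp
    moreover have "(norm (L x \<gamma>))\<^sup>2 \<le> (infsum (\<lambda>\<alpha>. norm (a \<alpha>) * norm (x (\<gamma> - \<alpha>))) (Zn N))\<^sup>2"
      using le by (simp add: power_mono)
    ultimately show ?thesis by linarith
  qed
  have "(\<lambda>\<gamma>. (norm (L x \<gamma>))\<^sup>2) summable_on Zn N"
  proof (rule summable_on_comparison_test[OF summable_on_cmult_right[OF Ss, of W]])
    show "(norm (L x \<gamma>))\<^sup>2 \<le> W * S \<gamma>" if "\<gamma> \<in> Zn N" for \<gamma> using bnd that .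
  qed simp
  then show ?thesis by (simp add: ell2_def L_eq)
qed

lemma L_add: assumes "x \<in> ell2 N" "y \<in> ell2 N" shows "L (cadd x y) = cadd (L x) (L y)"
proof
  fix \<gamma>
  show "L (cadd x y) \<gamma> = cadd (L x) (L y) \<gamma>"
  proof (cases "\<gamma> \<in> Zn N")
    case True
    have e: "ct (cadd x y) \<gamma> = (\<lambda>\<alpha>. ct x \<gamma> \<alpha> + ct y \<gamma> \<alpha>)"
      unfolding ct_def cadd_def by (rule ext) (simp only: matrix_add_ldistrib mscale_add)
    have "infsum (\<lambda>\<alpha>. ct x \<gamma> \<alpha> + ct y \<gamma> \<alpha>) (Zn N) = infsum (ct x \<gamma>) (Zn N) + infsum (ct y \<gamma>) (Zn N)"
      by (rule infsum_add) (rule ct_summable(2)[OF assms(1) True], rule ct_summable(2)[OF assms(2) True])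
    moreover have "L (cadd x y) \<gamma> = infsum (ct (cadd x y) \<gamma>) (Zn N)" using True by (simp add: L_eq)
    moreover have "cadd (L x) (L y) \<gamma> = infsum (ct x \<gamma>) (Zn N) + infsum (ct y \<gamma>) (Zn N)"
      using True by (simp add: L_eq cadd_def)
    ultimately show ?thesis unfolding e by simp
  next
    case False
    then show ?thesis unfolding L_eq cadd_def by simp
  qed
qed

lemma L_smul: assumes "x \<in> ell2 N" shows "L (csmul c x) = csmul c (L x)"
proof
  fix \<gamma>
  show "L (csmul c x) \<gamma> = csmul c (L x) \<gamma>"
  proof (cases "\<gamma> \<in> Zn N")
    case True
    have e: "ct (csmul c x) \<gamma> = (\<lambda>\<alpha>. mscale c (ct x \<gamma> \<alpha>))"
      unfolding ct_def csmul_def by (rule ext) (simp only: mscale_matmul mscale_mscale mult.commute)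
    have "infsum (\<lambda>\<alpha>. mscale c (ct x \<gamma> \<alpha>)) (Zn N) = mscale c (infsum (ct x \<gamma>) (Zn N))"
      by (rule infsumI, rule has_sum_bounded_linear[OF bounded_linear_mscale], rule has_sum_infsum,
          rule ct_summable(2)[OF assms True])
    moreover have "L (csmul c x) \<gamma> = infsum (ct (csmul c x) \<gamma>) (Zn N)" using True by (simp add: L_eq)
    moreover have "csmul c (L x) \<gamma> = mscale c (infsum (ct x \<gamma>) (Zn N))"
      using True by (simp add: L_eq csmul_def)
    ultimately show ?thesis unfolding e by simp
  next
    case False
    then show ?thesis unfolding L_eq csmul_def by simp
  qed
qed

end

lemma infsum_mip_left: "f summable_on A \<Longrightarrow> mip (infsum f A) Y = infsum (\<lambda>\<alpha>. mip (f \<alpha>) Y) A"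
  by (rule sym, rule infsumI, rule has_sum_bounded_linear[OF bounded_linear_mip_left], rule has_sum_infsum)
lemma infsum_mip_right: "f summable_on A \<Longrightarrow> mip Y (infsum f A) = infsum (\<lambda>\<alpha>. mip Y (f \<alpha>)) A"
  by (rule sym, rule infsumI, rule has_sum_bounded_linear[OF bounded_linear_mip_right], rule has_sum_infsum)

lemma mscale_matmul_left: "mscale c (A ** P) = (mscale c A) ** (P::complex^'n::finite^'n)"
  unfolding mscale_def by (simp add: vec_eq_iff matrix_matrix_mult_def sum_distrib_left algebra_simps)
lemma neg_mscale: "- mscale c M = mscale (- c) M"
  unfolding mscale_def by (simp add: vec_eq_iff)

locale conv_skew = conv +
  assumes ask: "\<And>\<alpha>. tw_star \<theta> N a \<alpha> = - a \<alpha>"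
begin

lemma a_neg: assumes "\<alpha> \<in> Zn N" shows "a (- \<alpha>) = mscale (- cnj (omega \<theta> N \<alpha> (- \<alpha>))) (madj (a \<alpha>))"
proof -
  have "tw_star \<theta> N a (- \<alpha>) = - a (- \<alpha>)" by (rule ask)
  moreover have "tw_star \<theta> N a (- \<alpha>) = mscale (cnj (omega \<theta> N \<alpha> (- \<alpha>))) (madj (a \<alpha>))"
    using Zn_uminus[OF assms] by (simp add: tw_star_def)
  ultimately have "a (- \<alpha>) = - mscale (cnj (omega \<theta> N \<alpha> (- \<alpha>))) (madj (a \<alpha>))"
    by (metis minus_minus)
  then show ?thesis by (simp add: neg_mscale)
qed

definition F :: "'a coeffs \<Rightarrow> 'a coeffs \<Rightarrow> (nat \<Rightarrow> int) \<times> (nat \<Rightarrow> int) \<Rightarrow> complex" where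
  "F x y p = mip (ct x (fst p) (snd p)) (y (fst p))"

lemma F_summable:
  assumes x: "x \<in> ell2 N" and y: "y \<in> ell2 N"
  shows "F x y summable_on Zn N \<times> Zn N"
proof -
  define H where "H = (\<lambda>p. (norm (y (fst p)))\<^sup>2 * norm (a (snd p)))"
  have Hs: "H summable_on Zn N \<times> Zn N"
    using prod_summable[of "\<lambda>\<gamma>. (norm (y \<gamma>))\<^sup>2" "Zn N" "\<lambda>\<alpha>. norm (a \<alpha>)" "Zn N", OF ell2_summ[OF y] aw]
    by (simp add: H_def case_prod_unfold)
  have s: "(\<lambda>p. (G x p + H p) / 2) summable_on Zn N \<times> Zn N"
    using summable_on_cmult_left[OF summable_on_add[OF G_summable[OF x] Hs], of "1/2"] by simp
  have b: "norm (F x y p) \<le> (G x p + H p) / 2" if "p \<in> Zn N \<times> Zn N" for p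
  proof -
    obtain \<gamma> \<alpha> where p: "p = (\<gamma>, \<alpha>)" by (cases p)
    have "norm (F x y p) \<le> norm (ct x \<gamma> \<alpha>) * norm (y \<gamma>)" by (simp add: F_def p mip_bound)
    also have "\<dots> \<le> norm (a \<alpha>) * norm (x (\<gamma> - \<alpha>)) * norm (y \<gamma>)"
      by (rule mult_right_mono[OF ct_norm]) simp
    also have "\<dots> = sqrt (norm (a \<alpha>)) * norm (x (\<gamma> - \<alpha>)) * (sqrt (norm (a \<alpha>)) * norm (y \<gamma>))"
      by (simp add: algebra_simps)
    also have "\<dots> \<le> ((sqrt (norm (a \<alpha>)) * norm (x (\<gamma> - \<alpha>)))\<^sup>2 + (sqrt (norm (a \<alpha>)) * norm (y \<gamma>))\<^sup>2) / 2"
      using sum_squares_bound[of "sqrt (norm (a \<alpha>)) * norm (x (\<gamma> - \<alpha>))" "sqrt (norm (a \<alpha>)) * norm (y \<gamma>)"]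
      by simp
    also have "\<dots> = (G x p + H p) / 2"
      by (simp add: G_def H_def p power_mult_distrib algebra_simps)
    finally show ?thesis .
  qed
  have "(\<lambda>p. norm (F x y p)) summable_on Zn N \<times> Zn N"
    by (rule Infinite_Sum.abs_summable_on_comparison_test'[OF s b])
  then show ?thesis by (rule abs_summable_summable)
qed

lemma F_formula: "F x y (\<beta> + \<alpha>, \<alpha>) = cnj (omega \<theta> N \<alpha> \<beta>) * mip (x \<beta>) (madj (a \<alpha>) ** y (\<beta> + \<alpha>))"
  by (simp add: F_def ct_def mip_scale_left mip_matmul)

lemma L_adj:
  assumes x: "x \<in> ell2 N" and y: "y \<in> ell2 N"
  shows "ip0 N (L x) y = - ip0 N x (L y)"
proof -
  have Fs: "F x y summable_on Zn N \<times> Zn N" by (rule F_summable[OF x y])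
  have Fs': "(\<lambda>p. F x y (case p of (\<beta>, \<alpha>) \<Rightarrow> (\<beta> + \<alpha>, \<alpha>))) summable_on Zn N \<times> Zn N"
    using summable_on_reindex_bij_betw[OF shift_bij, of "F x y" N] Fs by simp
  have "ip0 N (L x) y = infsum (\<lambda>\<gamma>. infsum (\<lambda>\<alpha>. F x y (\<gamma>, \<alpha>)) (Zn N)) (Zn N)"
    unfolding ip0_def
  proof (rule infsum_cong)
    fix \<gamma> assume g: "\<gamma> \<in> Zn N"
    show "mip (L x \<gamma>) (y \<gamma>) = infsum (\<lambda>\<alpha>. F x y (\<gamma>, \<alpha>)) (Zn N)"
      using g by (simp add: L_eq infsum_mip_left[OF ct_summable(2)[OF x g]] F_def)
  qed
  also have "\<dots> = infsum (F x y) (Zn N \<times> Zn N)"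
    using infsum_Sigma_banach[of "F x y" "Zn N" "\<lambda>_. Zn N"] Fs by simp
  also have "\<dots> = infsum (\<lambda>p. F x y (case p of (\<beta>, \<alpha>) \<Rightarrow> (\<beta> + \<alpha>, \<alpha>))) (Zn N \<times> Zn N)"
    by (rule infsum_reindex_bij_betw[OF shift_bij, symmetric])
  also have "\<dots> = infsum (\<lambda>\<beta>. infsum (\<lambda>\<alpha>. F x y (\<beta> + \<alpha>, \<alpha>)) (Zn N)) (Zn N)"
    using infsum_Sigma_banach[of "\<lambda>p. F x y (case p of (\<beta>, \<alpha>) \<Rightarrow> (\<beta> + \<alpha>, \<alpha>))" "Zn N" "\<lambda>_. Zn N"] Fs'
    by simp
  finally have lhs: "ip0 N (L x) y = infsum (\<lambda>\<beta>. infsum (\<lambda>\<alpha>. F x y (\<beta> + \<alpha>, \<alpha>)) (Zn N)) (Zn N)" .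
  have "ip0 N x (L y) = infsum (\<lambda>\<beta>. - infsum (\<lambda>\<alpha>. F x y (\<beta> + \<alpha>, \<alpha>)) (Zn N)) (Zn N)"
    unfolding ip0_def
  proof (rule infsum_cong)
    fix \<beta> assume b: "\<beta> \<in> Zn N"
    have "mip (x \<beta>) (L y \<beta>) = infsum (\<lambda>\<alpha>. mip (x \<beta>) (ct y \<beta> \<alpha>)) (Zn N)"
      using b by (simp add: L_eq infsum_mip_right[OF ct_summable(2)[OF y b]])
    also have "\<dots> = infsum (\<lambda>\<alpha>. mip (x \<beta>) (ct y \<beta> (- \<alpha>))) (Zn N)"
      by (rule infsum_reindex_bij_betw[OF neg_bij, symmetric])
    also have "\<dots> = infsum (\<lambda>\<alpha>. - F x y (\<beta> + \<alpha>, \<alpha>)) (Zn N)"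
    proof (rule infsum_cong)
      fix \<alpha> assume al: "\<alpha> \<in> Zn N"
      have "mip (x \<beta>) (ct y \<beta> (- \<alpha>))
          = omega \<theta> N (- \<alpha>) (\<beta> + \<alpha>) * mip (x \<beta>) (a (- \<alpha>) ** y (\<beta> + \<alpha>))"
        by (simp add: ct_def mip_scale_right diff_minus_eq_add)
      also have "\<dots> = omega \<theta> N (- \<alpha>) (\<beta> + \<alpha>) * (- cnj (omega \<theta> N \<alpha> (- \<alpha>)))
                       * mip (x \<beta>) (madj (a \<alpha>) ** y (\<beta> + \<alpha>))"
        by (simp add: a_neg[OF al] mscale_matmul_left[symmetric] mip_scale_right)
      also have "\<dots> = - F x y (\<beta> + \<alpha>, \<alpha>)"
        using phase_id[of \<theta> N \<alpha> \<beta>] by (simp add: F_formula)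
      finally show "mip (x \<beta>) (ct y \<beta> (- \<alpha>)) = - F x y (\<beta> + \<alpha>, \<alpha>)" .
    qed
    also have "\<dots> = - infsum (\<lambda>\<alpha>. F x y (\<beta> + \<alpha>, \<alpha>)) (Zn N)" by (rule infsum_uminus)
    finally show "mip (x \<beta>) (L y \<beta>) = - infsum (\<lambda>\<alpha>. F x y (\<beta> + \<alpha>, \<alpha>)) (Zn N)" .
  qed
  also have "\<dots> = - infsum (\<lambda>\<beta>. infsum (\<lambda>\<alpha>. F x y (\<beta> + \<alpha>, \<alpha>)) (Zn N)) (Zn N)" by (rule infsum_uminus)
  finally show ?thesis using lhs by simp
qed

end

lemma deriv_nth: "deriv k x \<alpha> = mscale (\<i> * of_int (\<alpha> k)) (x \<alpha>)"
  by (simp add: deriv_def)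

lemma norm_deriv: "norm (deriv k x \<alpha>) = norm (of_int (\<alpha> k) *\<^sub>R x \<alpha>)"
  by (simp add: deriv_nth norm_mscale norm_mult)

lemma deriv_ell2: "x \<in> domD N k \<Longrightarrow> deriv k x \<in> ell2 N"
  by (rule ell2_scale[where f="\<lambda>\<alpha>. of_int (\<alpha> k) *\<^sub>R x \<alpha>" and c=1])
     (auto simp: domD_def deriv_nth norm_mscale norm_mult ell2_out)

lemma domD_ell2: "x \<in> domD N k \<Longrightarrow> x \<in> ell2 N" by (simp add: domD_def)

lemma domD_cadd: assumes "x \<in> domD N k" "y \<in> domD N k" shows "cadd x y \<in> domD N k"
proof -
  have "(\<lambda>\<alpha>. of_int (\<alpha> k) *\<^sub>R cadd x y \<alpha>) = cadd (\<lambda>\<alpha>. of_int (\<alpha> k) *\<^sub>R x \<alpha>) (\<lambda>\<alpha>. of_int (\<alpha> k) *\<^sub>R y \<alpha>)"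
    by (simp add: cadd_def fun_eq_iff scaleR_add_right)
  then show ?thesis using assms by (simp add: domD_def ell2_cadd)
qed

lemma domD_csmul: assumes "x \<in> domD N k" shows "csmul c x \<in> domD N k"
proof -
  have "(\<lambda>\<alpha>. of_int (\<alpha> k) *\<^sub>R csmul c x \<alpha>) \<in> ell2 N"
    by (rule ell2_scale[where f="\<lambda>\<alpha>. of_int (\<alpha> k) *\<^sub>R x \<alpha>" and c="cmod c"])
       (use assms in \<open>auto simp: domD_def csmul_def mscale_scaleR[symmetric] norm_mscale ell2_out\<close>)
  then show ?thesis using assms by (simp add: domD_def ell2_csmul)
qed

lemma deriv_cadd: "deriv k (cadd x y) = cadd (deriv k x) (deriv k y)"
  by (simp add: deriv_def cadd_def mscale_add fun_eq_iff)
lemma deriv_csmul: "deriv k (csmul c x) = csmul c (deriv k x)"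
  by (simp add: deriv_def csmul_def mscale_mscale mult.commute fun_eq_iff)

lemma ip0_deriv: "ip0 N (deriv k x) y = - ip0 N x (deriv k y)"
proof -
  have "ip0 N (deriv k x) y = infsum (\<lambda>\<alpha>. - mip (x \<alpha>) (deriv k y \<alpha>)) (Zn N)"
    unfolding ip0_def by (rule infsum_cong) (simp add: deriv_nth mip_scale_left mip_scale_right)
  then show ?thesis by (simp add: infsum_uminus ip0_def)
qed

lemma basis_in_domD:
  assumes "\<beta> \<in> Zn N"
  shows "(\<lambda>\<alpha>. if \<alpha> = \<beta> then E else 0) \<in> domD N k"
proof -
  have fin: "g \<in> ell2 N" if "\<And>\<alpha>. \<alpha> \<noteq> \<beta> \<Longrightarrow> g \<alpha> = 0" for g :: "'n::finite coeffs"
  proof -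
    have "(\<lambda>\<alpha>. (norm (g \<alpha>))\<^sup>2) summable_on Zn N"
      by (rule finite_nonzero_values_imp_summable_on, rule finite_subset[of _ "{\<beta>}"]) (use that in auto)
    moreover have "\<forall>\<alpha>. \<alpha> \<notin> Zn N \<longrightarrow> g \<alpha> = 0" using that assms by metis
    ultimately show ?thesis unfolding ell2_def by auto
  qed
  show ?thesis unfolding domD_def by (auto intro!: fin)
qed

lemma ip0_single:
  assumes "\<beta> \<in> Zn N"
  shows "ip0 N (\<lambda>\<alpha>. if \<alpha> = \<beta> then E else 0) w = mip E (w \<beta>)"
proof -
  have "ip0 N (\<lambda>\<alpha>. if \<alpha> = \<beta> then E else 0) w = infsum (\<lambda>\<alpha>. mip (if \<alpha> = \<beta> then E else 0) (w \<alpha>)) {\<beta>}"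
    unfolding ip0_def by (rule infsum_cong_neutral) (use assms in auto)
  then show ?thesis by simp
qed

definition unitm :: "'n::finite \<Rightarrow> 'n \<Rightarrow> complex^'n^'n" where
  "unitm i j = (\<chi> a b. if a = i \<and> b = j then 1 else 0)"

lemma mip_unitm: "mip (unitm i j) P = P $ i $ (j::'n::finite)"
proof -
  have "mip (unitm i j) P = (\<Sum>a\<in>UNIV. \<Sum>b\<in>UNIV. if a = i \<and> b = j then P $ a $ b else 0)"
    unfolding mip_def unitm_def by (intro sum.cong refl) auto
  also have "\<dots> = (\<Sum>a\<in>UNIV. if a = i then P $ a $ j else 0)"
  proof (rule sum.cong[OF refl])
    fix a
    show "(\<Sum>b\<in>UNIV. if a = i \<and> b = j then P $ a $ b else 0) = (if a = i then P $ a $ j else 0)"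
      by (cases "a = i") (simp_all add: sum.delta')
  qed
  also have "\<dots> = P $ i $ j" by (simp add: sum.delta')
  finally show ?thesis .
qed

lemma adj_dom:
  assumes y: "y \<in> ell2 N" and z: "z \<in> ell2 N"
    and h: "\<forall>x\<in>domD N k. ip0 N (deriv k x) y = ip0 N x z"
  shows "y \<in> domD N k"
proof -
  have zeq: "z \<beta> = mscale (- (\<i> * of_int (\<beta> k))) (y \<beta>)" if b: "\<beta> \<in> Zn N" for \<beta>
  proof -
    have "mip E (z \<beta>) = mip E (mscale (- (\<i> * of_int (\<beta> k))) (y \<beta>))" for E
    proof -
      have "ip0 N (deriv k (\<lambda>\<alpha>. if \<alpha> = \<beta> then E else 0)) y = ip0 N (\<lambda>\<alpha>. if \<alpha> = \<beta> then E else 0) z"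
        using h basis_in_domD[OF b] by blast
      moreover have "deriv k (\<lambda>\<alpha>. if \<alpha> = \<beta> then E else 0) = (\<lambda>\<alpha>. if \<alpha> = \<beta> then mscale (\<i> * of_int (\<beta> k)) E else 0)"
        by (auto simp: deriv_def fun_eq_iff)
      ultimately have "mip (mscale (\<i> * of_int (\<beta> k)) E) (y \<beta>) = mip E (z \<beta>)"
        by (simp add: ip0_single[OF b])
      then show ?thesis by (simp add: mip_scale_left mip_scale_right)
    qed
    then have "z \<beta> $ i $ j = mscale (- (\<i> * of_int (\<beta> k))) (y \<beta>) $ i $ j" for i j
      by (metis mip_unitm)
    then show ?thesis by (simp add: vec_eq_iff)
  qed
  have "(\<lambda>\<alpha>. of_int (\<alpha> k) *\<^sub>R y \<alpha>) \<in> ell2 N"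
  proof (rule ell2_scale[where f=z and c=1])
    show "norm (of_int (\<alpha> k) *\<^sub>R y \<alpha>) \<le> 1 * norm (z \<alpha>)" if "\<alpha> \<in> Zn N" for \<alpha>
      using that by (simp add: zeq norm_mscale norm_mult)
  qed (use z y in \<open>auto simp: ell2_out\<close>)
  then show ?thesis using y by (simp add: domD_def)
qed

lemma density:
  fixes f :: "'n::finite coeffs"
  assumes f: "f \<in> ell2 N" and e: "e > 0"
  shows "\<exists>g\<in>domD N k. Re (hs_ip N (csub f g) (csub f g)) < e\<^sup>2"
proof -
  define n where "n = real CARD('n)"
  have n0: "n > 0" by (simp add: n_def finite_UNIV_card_ge_0)
  have sm: "(\<lambda>\<alpha>. (norm (f \<alpha>))\<^sup>2) summable_on Zn N" by (rule ell2_summ[OF f])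
  obtain F where F: "finite F" "F \<subseteq> Zn N"
    "dist (sum (\<lambda>\<alpha>. (norm (f \<alpha>))\<^sup>2) F) (infsum (\<lambda>\<alpha>. (norm (f \<alpha>))\<^sup>2) (Zn N)) \<le> n * e\<^sup>2 / 2"
    using infsum_finite_approximation[OF sm, of "n * e\<^sup>2 / 2"] n0 e by auto
  define g where "g = (\<lambda>\<alpha>. if \<alpha> \<in> F then f \<alpha> else 0)"
  have gfin: "h \<in> ell2 N" if "\<And>\<alpha>. \<alpha> \<notin> F \<Longrightarrow> h \<alpha> = 0" for h :: "'n coeffs"
  proof -
    have "(\<lambda>\<alpha>. (norm (h \<alpha>))\<^sup>2) summable_on Zn N"
      by (rule finite_nonzero_values_imp_summable_on, rule finite_subset[of _ F]) (use that F in auto)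
    moreover have "\<forall>\<alpha>. \<alpha> \<notin> Zn N \<longrightarrow> h \<alpha> = 0" using that F by auto
    ultimately show ?thesis unfolding ell2_def by auto
  qed
  have gD: "g \<in> domD N k" unfolding domD_def by (auto intro!: gfin simp: g_def)
  define h where "h = csub f g"
  have h: "h = (\<lambda>\<alpha>. if \<alpha> \<in> F then 0 else f \<alpha>)" by (auto simp: h_def csub_def g_def fun_eq_iff)
  have hl: "h \<in> ell2 N" unfolding h by (rule ell2_scale[OF f, where c=1]) (auto simp: ell2_out[OF f])
  define X where "X = infsum (\<lambda>\<alpha>. (norm (f \<alpha>))\<^sup>2) (Zn N)"
  have s1: "(\<lambda>\<alpha>. if \<alpha> \<in> F then (norm (f \<alpha>))\<^sup>2 else 0) summable_on Zn N"
    by (rule finite_nonzero_values_imp_summable_on, rule finite_subset[of _ F]) (use F in auto)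
  have s2: "(\<lambda>\<alpha>. (norm (h \<alpha>))\<^sup>2) summable_on Zn N" by (rule ell2_summ[OF hl])
  have "X = infsum (\<lambda>\<alpha>. (if \<alpha> \<in> F then (norm (f \<alpha>))\<^sup>2 else 0) + (norm (h \<alpha>))\<^sup>2) (Zn N)"
    unfolding X_def by (rule infsum_cong) (simp add: h)
  also have "\<dots> = infsum (\<lambda>\<alpha>. if \<alpha> \<in> F then (norm (f \<alpha>))\<^sup>2 else 0) (Zn N) + infsum (\<lambda>\<alpha>. (norm (h \<alpha>))\<^sup>2) (Zn N)"
    by (rule infsum_add[OF s1 s2])
  also have "infsum (\<lambda>\<alpha>. if \<alpha> \<in> F then (norm (f \<alpha>))\<^sup>2 else 0) (Zn N) = sum (\<lambda>\<alpha>. (norm (f \<alpha>))\<^sup>2) F"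
  proof -
    have "infsum (\<lambda>\<alpha>. if \<alpha> \<in> F then (norm (f \<alpha>))\<^sup>2 else 0) (Zn N) = infsum (\<lambda>\<alpha>. (norm (f \<alpha>))\<^sup>2) F"
      by (rule infsum_cong_neutral) (use F in auto)
    then show ?thesis using F by simp
  qed
  finally have tail: "infsum (\<lambda>\<alpha>. (norm (h \<alpha>))\<^sup>2) (Zn N) = X - sum (\<lambda>\<alpha>. (norm (f \<alpha>))\<^sup>2) F" by simp
  have "X - sum (\<lambda>\<alpha>. (norm (f \<alpha>))\<^sup>2) F \<le> n * e\<^sup>2 / 2" using F(3) unfolding X_def dist_real_def by linarith
  then have "Re (hs_ip N h h) \<le> e\<^sup>2 / 2"
    using n0 by (simp add: hs_ip_ip0 ip0_self[OF hl] tail n_def[symmetric] field_simps)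
  also have "\<dots> < e\<^sup>2" using e by simp
  finally show ?thesis using gD unfolding h_def by blast
qed

context conv_skew
begin

definition T where
  "T k x = cadd (L x) (deriv k x)"

lemma T_ell2: "x \<in> domD N k \<Longrightarrow> T k x \<in> ell2 N"
  unfolding T_def by (intro ell2_cadd L_ell2 deriv_ell2 domD_ell2)

lemma ip0_T:
  assumes x: "x \<in> domD N k" and y: "y \<in> ell2 N"
  shows "ip0 N (T k x) y = - ip0 N x (L y) + ip0 N (deriv k x) y"
  unfolding T_def
  by (subst ip0_add_left) (auto intro: L_ell2 deriv_ell2 domD_ell2 x y simp: L_adj[OF domD_ell2[OF x] y])

lemma T_skew: "skew_adjoint (ell2 N) (hs_ip N) (domD N k) (T k)"
  unfolding skew_adjoint_def
proof (intro conjI ballI allI impI)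
  show "domD N k \<subseteq> ell2 N" by (auto simp: domD_def)
next
  fix x :: "'a coeffs" assume "x \<in> domD N k" then show "T k x \<in> ell2 N" by (rule T_ell2)
next
  fix x y :: "'a coeffs" assume x: "x \<in> domD N k" and y: "y \<in> domD N k"
  show "cadd x y \<in> domD N k" by (rule domD_cadd[OF x y])
  show "T k (cadd x y) = cadd (T k x) (T k y)"
    unfolding T_def L_add[OF domD_ell2[OF x] domD_ell2[OF y]] deriv_cadd
    by (simp add: cadd_def fun_eq_iff algebra_simps)
next
  fix c and x :: "'a coeffs" assume x: "x \<in> domD N k"
  show "csmul c x \<in> domD N k" by (rule domD_csmul[OF x])
  show "T k (csmul c x) = csmul c (T k x)"
    unfolding T_def L_smul[OF domD_ell2[OF x]] deriv_csmul
    by (simp add: cadd_def csmul_def fun_eq_iff mscale_add)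
next
  fix f :: "'a coeffs" and e :: real assume "f \<in> ell2 N" "0 < e"
  then show "\<exists>g\<in>domD N k. Re (hs_ip N (csub f g) (csub f g)) < e\<^sup>2" by (rule density)
next
  fix x y :: "'a coeffs" assume x: "x \<in> domD N k" and y: "y \<in> domD N k"
  have "ip0 N (T k x) y = - ip0 N x (T k y)"
  proof -
    have "ip0 N (T k x) y = - ip0 N x (L y) + - ip0 N x (deriv k y)"
      using ip0_T[OF x domD_ell2[OF y]] ip0_deriv by simp
    also have "\<dots> = - ip0 N x (T k y)"
      unfolding T_def by (subst ip0_add_right) (auto intro: L_ell2 deriv_ell2 domD_ell2 x y)
    finally show ?thesis .
  qed
  then show "hs_ip N (T k x) y = - hs_ip N x (T k y)" by (simp add: hs_ip_ip0)
next
  fix y :: "'a coeffs" assume y: "y \<in> ell2 N"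
  show "(\<exists>z\<in>ell2 N. \<forall>x\<in>domD N k. hs_ip N (T k x) y = hs_ip N x z) = (y \<in> domD N k)"
  proof
    assume "\<exists>z\<in>ell2 N. \<forall>x\<in>domD N k. hs_ip N (T k x) y = hs_ip N x z"
    then obtain z where z: "z \<in> ell2 N" and h: "\<forall>x\<in>domD N k. hs_ip N (T k x) y = hs_ip N x z" by blast
    have h0: "ip0 N (T k x) y = ip0 N x z" if "x \<in> domD N k" for x
      using h that by (simp add: hs_ip_ip0)
    have "\<forall>x::'a coeffs\<in>domD N k. ip0 N (deriv k x) y = ip0 N x (cadd z (L y))"
    proof
      fix x :: "'a coeffs" assume x: "x \<in> domD N k"
      have "ip0 N x (cadd z (L y)) = ip0 N x z + ip0 N x (L y)"
        by (rule ip0_add_right) (auto intro: z L_ell2 y domD_ell2 x)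
      moreover have "ip0 N (deriv k x) y - ip0 N x (L y) = ip0 N x z"
        using h0[OF x] ip0_T[OF x y] by simp
      ultimately show "ip0 N (deriv k x) y = ip0 N x (cadd z (L y))"
        by (simp add: diff_eq_eq)
    qed
    then show "y \<in> domD N k" by (rule adj_dom[OF y ell2_cadd[OF z L_ell2[OF y]]])
  next
    assume yD: "y \<in> domD N k"
    show "\<exists>z\<in>ell2 N. \<forall>x\<in>domD N k. hs_ip N (T k x) y = hs_ip N x z"
    proof (intro bexI ballI)
      show "csmul (-1) (T k y) \<in> ell2 N" by (intro ell2_csmul T_ell2 yD)
      fix x :: "'a coeffs" assume x: "x \<in> domD N k"
      have "ip0 N (T k x) y = - ip0 N x (T k y)"
      proof -
        have "ip0 N (T k x) y = - ip0 N x (L y) + - ip0 N x (deriv k y)"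
          using ip0_T[OF x y] ip0_deriv by simp
        also have "\<dots> = - ip0 N x (T k y)"
          unfolding T_def by (subst ip0_add_right) (auto intro: L_ell2 deriv_ell2 domD_ell2 x yD)
        finally show ?thesis .
      qed
      then show "hs_ip N (T k x) y = hs_ip N x (csmul (-1) (T k y))"
        by (simp add: hs_ip_ip0 ip0_neg_right)
    qed
  qed
qed

end

definition hh :: "int \<Rightarrow> real" where "hh j = 1 / (1 + \<bar>real_of_int j\<bar>)\<^sup>2"

lemma hh_nonneg: "hh j \<ge> 0" by (simp add: hh_def)

lemma nat_part_summable: "(\<lambda>n::nat. 1 / (1 + real n)\<^sup>2) summable_on UNIV"
proof -
  have "summable (\<lambda>n. inverse (real (Suc n) ^ 2))"
    using inverse_power_summable[of 2, where 'a=real] by (subst summable_Suc_iff) simp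
  then have "summable (\<lambda>n::nat. 1 / (1 + real n)\<^sup>2)" by (simp add: inverse_eq_divide add.commute)
  then show ?thesis by (rule summable_nonneg_imp_summable_on) simp
qed

lemma hh_summable: "hh summable_on UNIV"
proof -
  have U: "(UNIV :: int set) = range int \<union> range (\<lambda>n. - int n - 1)"
  proof -
    have "j \<in> range int \<union> range (\<lambda>n. - int n - 1)" for j :: int
    proof (cases "j \<ge> 0")
      case True then show ?thesis by (metis UnI1 nonneg_int_cases rangeI)
    next
      case False
      then have "j = - int (nat (- j - 1)) - 1" by simp
      then show ?thesis by blast
    qed
    then show ?thesis by blast
  qed
  have s1: "hh summable_on range int"
    by (subst summable_on_reindex) (auto simp: hh_def o_def nat_part_summable)
  have s2: "hh summable_on range (\<lambda>n. - int n - 1)"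
  proof (subst summable_on_reindex)
    show "inj_on (\<lambda>n. - int n - 1) UNIV" by (auto simp: inj_on_def)
    show "(hh \<circ> (\<lambda>n. - int n - 1)) summable_on UNIV"
    proof (rule summable_on_comparison_test[OF nat_part_summable])
      fix n :: nat
      have "(1 + real n)\<^sup>2 \<le> (1 + \<bar>real_of_int (- int n - 1)\<bar>)\<^sup>2" by (simp add: power_mono)
      then show "(hh \<circ> (\<lambda>n. - int n - 1)) n \<le> 1 / (1 + real n)\<^sup>2"
        unfolding hh_def o_def by (intro divide_left_mono) (auto simp: add_pos_nonneg)
    qed (simp add: hh_def)
  qed
  have "hh summable_on (range int \<union> range (\<lambda>n. - int n - 1))"
    by (rule summable_on_Un_disjoint[OF s1 s2]) auto
  then show ?thesis using U by simp
qed

definition PP :: "nat \<Rightarrow> (nat \<Rightarrow> int) \<Rightarrow> real" where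
  "PP N \<alpha> = (\<Prod>k<N. hh (\<alpha> k))"

lemma PP_summable: "PP N summable_on Zn N"
proof (induction N)
  case 0
  have "Zn 0 = {0}" by (auto simp: Zn_def)
  then show ?case by simp
next
  case (Suc N)
  have bij: "bij_betw (\<lambda>(\<beta>, j). \<beta>(N := j)) (Zn N \<times> UNIV) (Zn (Suc N))"
  proof (rule bij_betwI[where g="\<lambda>\<alpha>. (\<alpha>(N := 0), \<alpha> N)"])
    show "(\<lambda>(\<beta>, j). \<beta>(N := j)) \<in> Zn N \<times> UNIV \<rightarrow> Zn (Suc N)" by (auto simp: Zn_def)
    show "(\<lambda>\<alpha>. (\<alpha>(N := 0), \<alpha> N)) \<in> Zn (Suc N) \<rightarrow> Zn N \<times> UNIV" by (auto simp: Zn_def)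
    show "(\<lambda>\<alpha>. (\<alpha>(N := 0), \<alpha> N)) ((\<lambda>(\<beta>, j). \<beta>(N := j)) p) = p" if "p \<in> Zn N \<times> UNIV" for p
      using that by (auto simp: Zn_def fun_eq_iff)
    show "(\<lambda>(\<beta>, j). \<beta>(N := j)) ((\<lambda>\<alpha>. (\<alpha>(N := 0), \<alpha> N)) \<alpha>) = \<alpha>" for \<alpha>
      by auto
  qed
  have eq: "PP (Suc N) (\<beta>(N := j)) = PP N \<beta> * hh j" for \<beta> j
    by (simp add: PP_def)
  have "(\<lambda>(\<beta>, j). PP N \<beta> * hh j) summable_on Zn N \<times> UNIV"
    by (rule prod_summable[OF Suc.IH hh_summable]) (auto simp: PP_def prod_nonneg hh_nonneg)
  then have "(\<lambda>p. PP (Suc N) ((\<lambda>(\<beta>, j). \<beta>(N := j)) p)) summable_on Zn N \<times> UNIV"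
    by (simp add: eq case_prod_unfold)
  then show ?case using summable_on_reindex_bij_betw[OF bij] by blast
qed

lemma smooth_l1:
  assumes a: "a \<in> smooth N"
  shows "(\<lambda>\<alpha>. norm (a \<alpha>)) summable_on Zn N"
proof -
  obtain C where C: "\<forall>\<alpha>\<in>Zn N. (1 + (\<Sum>k<N. \<bar>real_of_int (\<alpha> k)\<bar>)) ^ (2 * N) * norm (a \<alpha>) \<le> C"
    using a unfolding smooth_def by blast
  have b: "norm (a \<alpha>) \<le> C * PP N \<alpha>" if al: "\<alpha> \<in> Zn N" for \<alpha>
  proof -
    define s where "s = (\<Sum>k<N. \<bar>real_of_int (\<alpha> k)\<bar>)"
    have s0: "s \<ge> 0" unfolding s_def by (simp add: sum_nonneg)
    have pos: "(\<Prod>k<N. (1 + \<bar>real_of_int (\<alpha> k)\<bar>)\<^sup>2) > 0" by (intro prod_pos) (auto simp: add_pos_nonneg)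
    have "(\<Prod>k<N. (1 + \<bar>real_of_int (\<alpha> k)\<bar>)\<^sup>2) \<le> (\<Prod>k<N. (1 + s)\<^sup>2)"
    proof (rule prod_mono)
      fix k assume "k \<in> {..<N}"
      then have "\<bar>real_of_int (\<alpha> k)\<bar> \<le> s" unfolding s_def
        by (intro member_le_sum) auto
      then show "0 \<le> (1 + \<bar>real_of_int (\<alpha> k)\<bar>)\<^sup>2 \<and> (1 + \<bar>real_of_int (\<alpha> k)\<bar>)\<^sup>2 \<le> (1 + s)\<^sup>2"
        by (auto intro: power_mono)
    qed
    also have "\<dots> = (1 + s) ^ (2 * N)" by (simp add: power_mult)
    finally have le: "(\<Prod>k<N. (1 + \<bar>real_of_int (\<alpha> k)\<bar>)\<^sup>2) \<le> (1 + s) ^ (2 * N)" .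
    have "(\<Prod>k<N. (1 + \<bar>real_of_int (\<alpha> k)\<bar>)\<^sup>2) * norm (a \<alpha>) \<le> (1 + s) ^ (2 * N) * norm (a \<alpha>)"
      by (rule mult_right_mono[OF le]) simp
    also have "\<dots> \<le> C" using C al unfolding s_def by blast
    finally have "(\<Prod>k<N. (1 + \<bar>real_of_int (\<alpha> k)\<bar>)\<^sup>2) * norm (a \<alpha>) \<le> C" .
    then have "norm (a \<alpha>) \<le> C / (\<Prod>k<N. (1 + \<bar>real_of_int (\<alpha> k)\<bar>)\<^sup>2)"
      using pos by (simp add: field_simps)
    also have "\<dots> = C * PP N \<alpha>"
      by (simp add: PP_def hh_def prod_dividef)
    finally show ?thesis .
  qed
  show ?thesis
    by (rule summable_on_comparison_test[OF summable_on_cmult_right[OF PP_summable, of C]]) (use b in auto)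
qed

definition one :: "'n::finite coeffs" where "one = (\<lambda>\<alpha>. if \<alpha> = 0 then mat 1 else 0)"

lemma one_smooth: "(one :: 'n::finite coeffs) \<in> smooth N"
  unfolding smooth_def
proof (intro CollectI conjI allI impI)
  fix \<alpha> assume "\<alpha> \<notin> Zn N" then show "one \<alpha> = 0" by (auto simp: one_def)
next
  fix p :: nat
  show "\<exists>C. \<forall>\<alpha>\<in>Zn N. (1 + (\<Sum>k<N. \<bar>real_of_int (\<alpha> k)\<bar>)) ^ p * norm ((one :: 'n coeffs) \<alpha>) \<le> C"
    by (rule exI[where x="norm (mat 1 :: complex^'n^'n)"]) (auto simp: one_def)
qed

lemma tw_mult_one_left:
  assumes x: "\<And>\<alpha>. \<alpha> \<notin> Zn N \<Longrightarrow> x \<alpha> = 0"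
  shows "tw_mult \<theta> N one x = x"
proof
  fix \<gamma>
  show "tw_mult \<theta> N one x \<gamma> = x \<gamma>"
  proof (cases "\<gamma> \<in> Zn N")
    case True
    have "infsum (\<lambda>\<alpha>. mscale (omega \<theta> N \<alpha> (\<gamma> - \<alpha>)) (one \<alpha> ** x (\<gamma> - \<alpha>))) (Zn N)
        = infsum (\<lambda>\<alpha>. mscale (omega \<theta> N \<alpha> (\<gamma> - \<alpha>)) (one \<alpha> ** x (\<gamma> - \<alpha>))) {0}"
      by (rule infsum_cong_neutral) (auto simp: one_def)
    then show ?thesis using True by (simp add: tw_mult_def one_def)
  next
    case False then show ?thesis by (simp add: tw_mult_def x)
  qed
qed

lemma tw_mult_one_right:
  assumes x: "\<And>\<alpha>. \<alpha> \<notin> Zn N \<Longrightarrow> x \<alpha> = 0"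
  shows "tw_mult \<theta> N x one = x"
proof
  fix \<gamma>
  show "tw_mult \<theta> N x one \<gamma> = x \<gamma>"
  proof (cases "\<gamma> \<in> Zn N")
    case True
    have "infsum (\<lambda>\<alpha>. mscale (omega \<theta> N \<alpha> (\<gamma> - \<alpha>)) (x \<alpha> ** one (\<gamma> - \<alpha>))) (Zn N)
        = infsum (\<lambda>\<alpha>. mscale (omega \<theta> N \<alpha> (\<gamma> - \<alpha>)) (x \<alpha> ** one (\<gamma> - \<alpha>))) {\<gamma>}"
      by (rule infsum_cong_neutral) (use True in \<open>auto simp: one_def\<close>)
    then show ?thesis using True by (simp add: tw_mult_def one_def)
  next
    case False then show ?thesis by (simp add: tw_mult_def x)
  qed
qed

lemma madj_zero: "madj 0 = 0" by (simp add: vec_eq_iff)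
lemma mscale_0_left: "mscale 0 M = 0" by (simp add: mscale_def vec_eq_iff)

lemma madj_mat1: "madj (mat 1 :: complex^'n::finite^'n) = mat 1"
  by (simp add: vec_eq_iff mat_def)

lemma tw_star_one: "tw_star \<theta> N one = one"
proof
  fix \<alpha>
  show "tw_star \<theta> N one \<alpha> = one \<alpha>"
  proof (cases "\<alpha> \<in> Zn N")
    case True
    show ?thesis
    proof (cases "\<alpha> = 0")
      case True then show ?thesis by (simp add: tw_star_def one_def madj_mat1)
    next
      case False
      then have "- \<alpha> \<noteq> 0" by simp
      then show ?thesis using True False by (simp add: tw_star_def one_def madj_zero)
    qed
  next
    case False
    then have "\<alpha> \<noteq> 0" by auto
    then show ?thesis using False by (simp add: tw_star_def one_def)
  qed
qed

lemma deriv_one: "deriv k one = (\<lambda>_. 0)"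
  by (auto simp: deriv_def one_def fun_eq_iff mscale_0_left)

lemma smooth_out: "x \<in> smooth N \<Longrightarrow> \<alpha> \<notin> Zn N \<Longrightarrow> x \<alpha> = 0"
  by (simp add: smooth_def)

theorem mainTheorem5:
  fixes \<theta> :: "nat \<Rightarrow> nat \<Rightarrow> real" and N :: nat
    and nab :: "nat \<Rightarrow> 'n::finite coeffs \<Rightarrow> 'n coeffs"
  assumes "\<forall>k<N. \<forall>l<N. \<theta> k l = - \<theta> l k"
    and "is_connection \<theta> N nab"
    and "is_compatible \<theta> N nab"
  shows "\<forall>k<N. \<exists>T. (\<forall>x\<in>smooth N. T x = nab k x) \<and>
           skew_adjoint (ell2 N) (hs_ip N) (domD N k) T"
proof (intro allI impI)
  fix k assume k: "k < N"
  have conn_sm: "\<And>x. x \<in> smooth N \<Longrightarrow> nab k x \<in> smooth N"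
    and leib: "\<And>\<xi> b. \<xi> \<in> smooth N \<Longrightarrow> b \<in> smooth N \<Longrightarrow>
        nab k (tw_mult \<theta> N \<xi> b) = cadd (tw_mult \<theta> N (nab k \<xi>) b) (tw_mult \<theta> N \<xi> (deriv k b))"
    using assms(2) k unfolding is_connection_def by blast+
  have compat: "\<And>x y. x \<in> smooth N \<Longrightarrow> y \<in> smooth N \<Longrightarrow>
     cadd (tw_mult \<theta> N (tw_star \<theta> N (nab k x)) y) (tw_mult \<theta> N (tw_star \<theta> N x) (nab k y))
       = deriv k (tw_mult \<theta> N (tw_star \<theta> N x) y)"
    using assms(3) k unfolding is_compatible_def by blast
  define a :: "'n coeffs" where "a = nab k one"
  have as: "a \<in> smooth N" unfolding a_def by (rule conn_sm[OF one_smooth])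
  have az: "\<And>\<alpha>. \<alpha> \<notin> Zn N \<Longrightarrow> a \<alpha> = 0" using as by (rule smooth_out)
  have one_out: "\<And>\<alpha>. \<alpha> \<notin> Zn N \<Longrightarrow> (one :: 'n coeffs) \<alpha> = 0" using one_smooth by (rule smooth_out)
  have star_out: "\<And>\<alpha>. \<alpha> \<notin> Zn N \<Longrightarrow> tw_star \<theta> N a \<alpha> = 0" by (simp add: tw_star_def)
  have ask: "tw_star \<theta> N a \<alpha> = - a \<alpha>" for \<alpha>
  proof -
    have "cadd (tw_mult \<theta> N (tw_star \<theta> N a) one) (tw_mult \<theta> N (tw_star \<theta> N one) a)
       = deriv k (tw_mult \<theta> N (tw_star \<theta> N one) one)"
      using compat[OF one_smooth one_smooth] unfolding a_def .
    then have "cadd (tw_star \<theta> N a) a = (\<lambda>_. 0)"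
      by (simp add: tw_star_one tw_mult_one_right[OF star_out] tw_mult_one_left[OF az]
          tw_mult_one_left[OF one_out] deriv_one)
    then have "tw_star \<theta> N a \<alpha> + a \<alpha> = 0" by (simp add: cadd_def fun_eq_iff)
    then show ?thesis by (simp add: eq_neg_iff_add_eq_0)
  qed
  interpret cs: conv_skew \<theta> N a
    by unfold_locales (auto simp: az smooth_l1[OF as] ask)
  show "\<exists>T. (\<forall>x\<in>smooth N. T x = nab k x) \<and> skew_adjoint (ell2 N) (hs_ip N) (domD N k) T"
  proof (intro exI conjI ballI)
    show "skew_adjoint (ell2 N) (hs_ip N) (domD N k) (cs.T k)" by (rule cs.T_skew)
    fix x :: "'n coeffs" assume x: "x \<in> smooth N"
    have dx: "\<And>\<alpha>. \<alpha> \<notin> Zn N \<Longrightarrow> deriv k x \<alpha> = 0" using smooth_out[OF x] by (simp add: deriv_def)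
    have "nab k (tw_mult \<theta> N one x) = cadd (tw_mult \<theta> N a x) (tw_mult \<theta> N one (deriv k x))"
      unfolding a_def by (rule leib[OF one_smooth x])
    then show "cs.T k x = nab k x"
      by (simp add: cs.T_def tw_mult_one_left[OF smooth_out[OF x]] tw_mult_one_left[OF dx])
  qed
qed

end
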